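(* In an $L$-user functional decode-and-forward multi-way relay network with lattice codes, under the equal average channel gain scenario, the average sum rate of the proposed pairing scheme equals that of pairing scheme A and that of pairing scheme B.
   Context: Setting: $L$ users exchange messages via a single relay (no direct links, half-duplex); one time frame has a multiple access phase and a broadcast phase, each of $L-1$ slots; in each multiple-access slot a pair of users transmits dithered lattice codewords simultaneously, the relay decodes the modulo-lattice sum of their lattice points (functional decode-and-forward) and broadcasts it in the corresponding broadcast slot; users recover all messages using their own. User power $P$, relay power $P_r$, AWGN power $N_0$; $h_{j,r}$ is the zero-mean complex Gaussian (block Rayleigh) channel between user $j$ and the relay (reciprocal), with variance $\sigma^2_{h_{j,r}}$. Pairing schemes: proposed: the common user $i$ is the user with largest average channel gain, and every other user pairs with $i$ in its own slot; scheme A: in slot $t\in[1,L-1]$ users $t$ and $t+1$ pair; scheme B: in slot $t$, users $t$ and $L-t+1$ pair if $1\le t\le\lfloor L/2\rfloor$, and users $t+1$ and $L-t+1$ pair if $\lfloor L/2\rfloor<t\le L-1$. Equal average channel gain scenario: all $\sigma^2_{h_{j,r}}$ equal and fixed over all frames (the proposed scheme's common user is chosen at random each frame). Sum rate: for a scheme in which slot $t$ pairs users $a_t,b_t$, $R_s=\frac{1}{2(L-1)}\sum_{t}\left(\log\left(\frac{|h_{a_t,r}|^2}{|h_{a_t,r}|^2+|h_{b_t,r}|^2}+\frac{P|h_{a_t,r}|^2}{N_0}\right)+\log\left(\frac{|h_{b_t,r}|^2}{|h_{a_t,r}|^2+|h_{b_t,r}|^2}+\frac{P|h_{b_t,r}|^2}{N_0}\right)\right)$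 ($\log$ base 2); the average sum rate is its expectation over channel realizations. *)

theory Defs
  imports "HOL-Probability.Probability"
begin

text \<open>Rate contribution of one multiple-access/broadcast slot pairing users with
  instantaneous channel gains x = |h_a|^2 and y = |h_b|^2 (log base 2).\<close>
definition pair_rate :: "real \<Rightarrow> real \<Rightarrow> real \<Rightarrow> real \<Rightarrow> real" where
  "pair_rate P N0 x y =
     log 2 (x / (x + y) + P * x / N0) + log 2 (y / (x + y) + P * y / N0)"

text \<open>A pairing scheme maps slot t in {1..L-1} to the pair of users (a_t, b_t).
  Sum rate for channel realisation h (h j = h_{j,r}).\<close>
definition sum_rate ::
  "nat \<Rightarrow> real \<Rightarrow> real \<Rightarrow> (nat \<Rightarrow> complex) \<Rightarrow> (nat \<Rightarrow> nat \<times> nat) \<Rightarrow> real" where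
  "sum_rate L P N0 h pr =
     (1 / (2 * (real L - 1))) *
     (\<Sum>t\<in>{1..L-1}. pair_rate P N0 ((cmod (h (fst (pr t))))\<^sup>2) ((cmod (h (snd (pr t))))\<^sup>2))"

text \<open>Proposed scheme with common user i: every other user j pairs with i in its
  own slot (slot t serves user t if t < i, and user t+1 otherwise).\<close>
definition proposed_pairing :: "nat \<Rightarrow> nat \<Rightarrow> nat \<times> nat" where
  "proposed_pairing i t = (i, if t < i then t else t + 1)"

definition schemeA_pairing :: "nat \<Rightarrow> nat \<times> nat" where
  "schemeA_pairing t = (t, t + 1)"

definition schemeB_pairing :: "nat \<Rightarrow> nat \<Rightarrow> nat \<times> nat" where
  "schemeB_pairing L t =
     (if 1 \<le> t \<and> t \<le> L div 2 then (t, L - t + 1) else (t + 1, L - t + 1))"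

definition avg_sum_rate ::
  "'a measure \<Rightarrow> nat \<Rightarrow> real \<Rightarrow> real \<Rightarrow> (nat \<Rightarrow> 'a \<Rightarrow> complex) \<Rightarrow> (nat \<Rightarrow> nat \<times> nat) \<Rightarrow> real" where
  "avg_sum_rate M L P N0 h pr = (\<integral>\<omega>. sum_rate L P N0 (\<lambda>j. h j \<omega>) pr \<partial>M)"

definition cgauss_density :: "real \<Rightarrow> complex \<Rightarrow> ennreal" where
  "cgauss_density s z = ennreal (exp (- (cmod z)\<^sup>2 / s) / (pi * s))"

end

theory Submission
  imports Defs
begin


lemma gauss_int:
  assumes s: "s > 0"
  shows "integrable lborel (\<lambda>x::real. exp (- x\<^sup>2 / s) * x ^ k)"
proof -
  define \<sigma> where "\<sigma> = sqrt (s/2)"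
  have sig: "\<sigma>\<^sup>2 = s/2" using s by (simp add: \<sigma>_def)
  have sp: "\<sigma> > 0" using s by (simp add: \<sigma>_def)
  have eq: "exp (- x\<^sup>2 / s) * x ^ k = sqrt (2 * pi * \<sigma>\<^sup>2) * (normal_density 0 \<sigma> x * (x - 0)^k)" for x
    using s sp unfolding normal_density_def sig by (simp add: field_simps)
  show ?thesis
    unfolding eq by (intro integrable_mult_right) (rule integrable_normal_moment[OF sp])
qed

lemma powr_half_int:
  "integrable lborel (\<lambda>x::real. indicator {0..1} x * x powr (-1/2))"
proof -
  have "(\<lambda>x::real. x powr (-1/2)) absolutely_integrable_on {0..1}"
    by (rule nonnegative_absolutely_integrable_1[OF integrable_on_powr_from_0]) auto
  then have "integrable lebesgue (\<lambda>x::real. indicator {0..1} x * x powr (-1/2))"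
    by (simp add: absolutely_integrable_on_def set_integrable_def)
  moreover have "(\<lambda>x::real. indicator {0..1} x * x powr (-1/2)) \<in> borel_measurable lborel" by measurable
  ultimately show ?thesis using integrable_completion by blast
qed

lemma ln_bound_small:
  fixes x :: real assumes "0 < x" "x \<le> 1"
  shows "\<bar>ln x\<bar> \<le> 2 * x powr (-1/2)"
proof -
  have "ln (x powr (-1/2)) \<le> x powr (-1/2) - 1" using assms by (intro ln_le_minus_one) simp
  moreover have "ln (x powr (-1/2)) = -1/2 * ln x" using assms ln_powr[of x "-1/2"] by simp
  moreover have "ln x \<le> 0" using assms by simp
  ultimately show ?thesis by linarith
qed

lemma gauss_ln_int:
  assumes s: "s > 0"
  shows "integrable lborel (\<lambda>x::real. exp (- x\<^sup>2 / s) * \<bar>ln \<bar>x\<bar>\<bar>)"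
proof (rule Bochner_Integration.integrable_bound)
  let ?g = "\<lambda>x::real. indicator {0..1} x * x powr (-1/2)"
  have i1: "integrable lborel (\<lambda>x. ?g (0 + (-1) * x))"
    by (rule lborel_integrable_real_affine[OF powr_half_int]) simp
  show "integrable lborel (\<lambda>x. 2 * ?g x + 2 * ?g (0 + (-1) * x) + exp (- x\<^sup>2 / s) * x ^ 2)"
    using i1 powr_half_int gauss_int[OF s, of 2] by (intro Bochner_Integration.integrable_add integrable_mult_right) auto
  show "(\<lambda>x::real. exp (- x\<^sup>2 / s) * \<bar>ln \<bar>x\<bar>\<bar>) \<in> borel_measurable lborel" by measurable
  show "AE x in lborel. norm (exp (- x\<^sup>2 / s) * \<bar>ln \<bar>x\<bar>\<bar>)
     \<le> norm (2 * ?g x + 2 * ?g (0 + (-1) * x) + exp (- x\<^sup>2 / s) * x ^ 2)"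
  proof (rule AE_I2)
    fix x :: real
    have e0: "0 < exp (- x\<^sup>2 / s)" by simp
    have e1: "exp (- x\<^sup>2 / s) \<le> 1" using s by (simp add: divide_nonneg_pos)
    have gn: "0 \<le> ?g y" for y by (simp add: indicator_def)
    have main: "exp (- x\<^sup>2 / s) * \<bar>ln \<bar>x\<bar>\<bar> \<le> 2 * ?g x + 2 * ?g (0 + (-1) * x) + exp (- x\<^sup>2 / s) * x ^ 2"
    proof (cases "x = 0")
      case True then show ?thesis by (simp add: indicator_def)
    next
      case False
      show ?thesis
      proof (cases "\<bar>x\<bar> \<le> 1")
        case True
        have "\<bar>ln \<bar>x\<bar>\<bar> \<le> 2 * \<bar>x\<bar> powr (-1/2)" using False True by (intro ln_bound_small) auto
        moreover have "\<bar>x\<bar> powr (-1/2) = ?g x + ?g (0 + (-1) * x)"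
          using False True by (cases "x > 0") (auto simp: indicator_def)
        ultimately have "\<bar>ln \<bar>x\<bar>\<bar> \<le> 2 * ?g x + 2 * ?g (0 + (-1) * x)" by simp
        moreover have "exp (- x\<^sup>2 / s) * \<bar>ln \<bar>x\<bar>\<bar> \<le> \<bar>ln \<bar>x\<bar>\<bar>"
          using e1 by (simp add: mult_left_le_one_le)
        moreover have "0 \<le> exp (- x\<^sup>2 / s) * x ^ 2" by simp
        ultimately show ?thesis by linarith
      next
        case False
        have "ln \<bar>x\<bar> \<le> \<bar>x\<bar> - 1" using False by (intro ln_le_minus_one) auto
        moreover have "\<bar>x\<bar> \<le> x^2" using False by (simp add: power2_eq_square abs_le_square_iff) (metis abs_ge_self abs_mult_self_eq  mult_le_cancel_left1 not_le abs_ge_zero order_trans less_eq_real_def mult_left_mono)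
        moreover have "0 \<le> ln \<bar>x\<bar>" using False by simp
        ultimately have "\<bar>ln \<bar>x\<bar>\<bar> \<le> x^2" by linarith
        then have "exp (- x\<^sup>2 / s) * \<bar>ln \<bar>x\<bar>\<bar> \<le> exp (- x\<^sup>2 / s) * x ^ 2"
          using e0 by (intro mult_left_mono) auto
        then show ?thesis using gn[of x] gn[of "0 + (-1)*x"] by linarith
      qed
    qed
    moreover have "0 \<le> exp (- x\<^sup>2 / s) * \<bar>ln \<bar>x\<bar>\<bar>" by simp
    ultimately show "norm (exp (- x\<^sup>2 / s) * \<bar>ln \<bar>x\<bar>\<bar>)
     \<le> norm (2 * ?g x + 2 * ?g (0 + (-1) * x) + exp (- x\<^sup>2 / s) * x ^ 2)" by simp
  qed
qed


lemma meas_Complex[measurable]: "(\<lambda>p::real\<times>real. Complex (fst p) (snd p)) \<in> borel_measurable (lborel \<Otimes>\<^sub>M lborel)"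
proof -
  have "(\<lambda>p::real\<times>real. Complex (fst p) (snd p)) = (\<lambda>p. complex_of_real (fst p) + \<i> * complex_of_real (snd p))"
    by (auto simp: complex_eq_iff)
  moreover have "(\<lambda>p::real\<times>real. complex_of_real (fst p) + \<i> * complex_of_real (snd p)) \<in> borel_measurable (lborel \<Otimes>\<^sub>M lborel)"
    by measurable
  ultimately show ?thesis by simp
qed

lemma lborel_complex: "distr (lborel \<Otimes>\<^sub>M lborel) borel (\<lambda>p. Complex (fst p) (snd p)) = (lborel :: complex measure)"
proof (rule lborel_eqI[symmetric])
  fix l u :: complex
  assume lu: "\<And>b. b \<in> Basis \<Longrightarrow> l \<bullet> b \<le> u \<bullet> b"
  have "(\<lambda>p. Complex (fst p) (snd p)) -` box l u \<inter> space (lborel \<Otimes>\<^sub>M lborel) = {Re l<..<Re u} \<times> {Im l<..<Im u}"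
    by (auto simp: box_def Basis_complex_def space_pair_measure)
  moreover have "Re l \<le> Re u" "Im l \<le> Im u" using lu[of 1] lu[of \<i>] by (auto simp: Basis_complex_def)
  ultimately show "emeasure (distr (lborel \<Otimes>\<^sub>M lborel) borel (\<lambda>p. Complex (fst p) (snd p))) (box l u) = (\<Prod>b\<in>Basis. (u - l) \<bullet> b)"
    by (simp add: emeasure_distr lborel.emeasure_pair_measure_Times Basis_complex_def ennreal_mult)
qed simp

lemma integrable_complex_lborel:
  fixes g :: "complex \<Rightarrow> real"
  assumes [measurable]: "g \<in> borel_measurable borel"
  shows "integrable lborel g \<longleftrightarrow> integrable (lborel \<Otimes>\<^sub>M lborel) (\<lambda>p. g (Complex (fst p) (snd p)))"
  by (subst lborel_complex[symmetric], subst integrable_distr_eq) auto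

lemma integrable_prod_mult:
  fixes f g :: "real \<Rightarrow> real"
  assumes f: "integrable lborel f" and g: "integrable lborel g"
  shows "integrable (lborel \<Otimes>\<^sub>M lborel) (\<lambda>p. f (fst p) * g (snd p))"
proof (rule lborel_pair.Fubini_integrable)
  have [measurable]: "f \<in> borel_measurable lborel" "g \<in> borel_measurable lborel"
    using f g by auto
  show "(\<lambda>p. f (fst p) * g (snd p)) \<in> borel_measurable (lborel \<Otimes>\<^sub>M lborel)" by measurable
  have "(\<lambda>x. \<integral>y. norm (f (fst (x, y)) * g (snd (x, y))) \<partial>lborel) = (\<lambda>x. \<bar>f x\<bar> * (\<integral>y. \<bar>g y\<bar> \<partial>lborel))"
    by (simp add: abs_mult)
  then show "integrable lborel (\<lambda>x. \<integral>y. norm (f (fst (x, y)) * g (snd (x, y))) \<partial>lborel)"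
    using f by simp
  show "AE x in lborel. integrable lborel (\<lambda>y. f (fst (x, y)) * g (snd (x, y)))"
    using g by simp
qed


lemma cmod_Complex_sq: "(cmod (Complex x y))\<^sup>2 = x\<^sup>2 + y\<^sup>2"
  by (simp add: cmod_def)

lemma exp_split: "exp (- (x\<^sup>2 + y\<^sup>2) / (s::real)) = exp (- x\<^sup>2 / s) * exp (- y\<^sup>2 / s)"
proof -
  have "- (x\<^sup>2 + y\<^sup>2) / s = (- x\<^sup>2 / s) + (- y\<^sup>2 / s)" by (simp add: diff_divide_distrib)
  then show ?thesis by (simp only: exp_add)
qed

lemma cmod_exp_Complex: "exp (- (cmod (Complex x y))\<^sup>2 / (s::real)) = exp (- x\<^sup>2 / s) * exp (- y\<^sup>2 / s)"
  by (simp only: cmod_Complex_sq exp_split)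

lemma integrable_complex_from:
  fixes g :: "complex \<Rightarrow> real"
  assumes I: "integrable (lborel \<Otimes>\<^sub>M lborel) F" and E: "\<And>x y. F (x, y) = g (Complex x y)"
    and m: "g \<in> borel_measurable borel"
  shows "integrable lborel g"
proof -
  have "integrable (lborel \<Otimes>\<^sub>M lborel) F \<longleftrightarrow> integrable (lborel \<Otimes>\<^sub>M lborel) (\<lambda>p. g (Complex (fst p) (snd p)))"
    by (rule Bochner_Integration.integrable_cong[OF refl]) (metis E prod.collapse)
  with I have "integrable (lborel \<Otimes>\<^sub>M lborel) (\<lambda>p. g (Complex (fst p) (snd p)))" by blast
  then show ?thesis using integrable_complex_lborel[OF m] by blast
qed

lemma cint_const:
  assumes s: "s > 0"
  shows "integrable lborel (\<lambda>z::complex. exp (- (cmod z)\<^sup>2 / s))"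
proof (rule integrable_complex_from[OF integrable_prod_mult[OF gauss_int[OF s, of 0] gauss_int[OF s, of 0]]])
  show "(\<lambda>z::complex. exp (- (cmod z)\<^sup>2 / s)) \<in> borel_measurable borel" by measurable
  fix x y :: real
  show "exp (- (fst (x, y))\<^sup>2 / s) * fst (x, y) ^ 0 * (exp (- (snd (x, y))\<^sup>2 / s) * snd (x, y) ^ 0) =
         exp (- (cmod (Complex x y))\<^sup>2 / s)"
    by (simp only: fst_conv snd_conv power_0 mult_1_right cmod_exp_Complex)
qed

lemma cint_sq:
  assumes s: "s > 0"
  shows "integrable lborel (\<lambda>z::complex. exp (- (cmod z)\<^sup>2 / s) * (cmod z)\<^sup>2)"
proof -
  have I: "integrable (lborel \<Otimes>\<^sub>M lborel) (\<lambda>p. exp (- (fst p)\<^sup>2 / s) * (fst p)^2 * (exp (- (snd p)\<^sup>2 / s) * (snd p)^0)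
      + exp (- (fst p)\<^sup>2 / s) * (fst p)^0 * (exp (- (snd p)\<^sup>2 / s) * (snd p)^2))"
    by (rule Bochner_Integration.integrable_add[OF integrable_prod_mult[OF gauss_int[OF s] gauss_int[OF s]] integrable_prod_mult[OF gauss_int[OF s] gauss_int[OF s]]])
  have E: "exp (- x\<^sup>2 / s) * x^2 * (exp (- y\<^sup>2 / s) * y^0)
      + exp (- x\<^sup>2 / s) * x^0 * (exp (- y\<^sup>2 / s) * y^2)
     = exp (- (cmod (Complex x y))\<^sup>2 / s) * (cmod (Complex x y))\<^sup>2" for x y
  proof -
    have gen: "\<And>x1 x2 x5 (x6::real). x1*x5*(x2*1) + x1*1*(x2*x6) = x1*x2*(x5+x6)" by (simp add: algebra_simps)
    show ?thesis by (simp only: cmod_Complex_sq exp_split power_0 gen)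
  qed
  show ?thesis
  proof (rule integrable_complex_from[OF I])
    show "(\<lambda>z::complex. exp (- (cmod z)\<^sup>2 / s) * (cmod z)\<^sup>2) \<in> borel_measurable borel" by measurable
    fix x y :: real
    show "exp (- (fst (x, y))\<^sup>2 / s) * (fst (x, y))^2 * (exp (- (snd (x, y))\<^sup>2 / s) * (snd (x, y))^0)
      + exp (- (fst (x, y))\<^sup>2 / s) * (fst (x, y))^0 * (exp (- (snd (x, y))\<^sup>2 / s) * (snd (x, y))^2)
     = exp (- (cmod (Complex x y))\<^sup>2 / s) * (cmod (Complex x y))\<^sup>2"
      unfolding fst_conv snd_conv by (rule E)
  qed
qed

lemma ln_sum_sq_bound:
  fixes x y :: real
  shows "\<bar>ln (x\<^sup>2 + y\<^sup>2)\<bar> \<le> x\<^sup>2 + y\<^sup>2 + 2 * \<bar>ln \<bar>x\<bar>\<bar> + 2 * \<bar>ln \<bar>y\<bar>\<bar>"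
proof (cases "x = 0 \<and> y = 0")
  case True then show ?thesis by simp
next
  case False
  then have pos: "0 < x\<^sup>2 + y\<^sup>2" by (simp add: sum_power2_gt_zero_iff)
  have up: "ln (x\<^sup>2 + y\<^sup>2) \<le> x\<^sup>2 + y\<^sup>2" using pos ln_le_minus_one[OF pos] by linarith
  have low: "- ln (x\<^sup>2 + y\<^sup>2) \<le> 2 * \<bar>ln \<bar>x\<bar>\<bar> + 2 * \<bar>ln \<bar>y\<bar>\<bar>"
  proof (cases "x = 0")
    case True
    then have "y \<noteq> 0" using False by simp
    have "x\<^sup>2 + y\<^sup>2 = \<bar>y\<bar> ^ 2" using True by simp
    moreover have "ln (\<bar>y\<bar> ^ 2) = real 2 * ln \<bar>y\<bar>" by (rule ln_realpow)
    ultimately have "ln (x\<^sup>2 + y\<^sup>2) = 2 * ln \<bar>y\<bar>" by simp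
    then show ?thesis by simp
  next
    case False
    have "ln (x\<^sup>2) \<le> ln (x\<^sup>2 + y\<^sup>2)" using False by (intro ln_mono) auto
    moreover have "ln (x\<^sup>2) = 2 * ln \<bar>x\<bar>" using ln_realpow[of "\<bar>x\<bar>" 2] by simp
    ultimately show ?thesis by simp
  qed
  have n1: "0 \<le> x\<^sup>2 + y\<^sup>2" "0 \<le> \<bar>ln \<bar>x\<bar>\<bar>" "0 \<le> \<bar>ln \<bar>y\<bar>\<bar>" by simp_all
  show ?thesis unfolding abs_le_iff using up low n1 by linarith
qed

lemma cint_ln:
  assumes s: "s > 0"
  shows "integrable lborel (\<lambda>z::complex. exp (- (cmod z)\<^sup>2 / s) * \<bar>ln ((cmod z)\<^sup>2)\<bar>)"
proof -
  let ?e = "\<lambda>x::real. exp (- x\<^sup>2 / s)"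
  have B: "integrable (lborel \<Otimes>\<^sub>M lborel) (\<lambda>p. 
        ?e (fst p) * (fst p)^2 * (?e (snd p) * (snd p)^0)
      + ?e (fst p) * (fst p)^0 * (?e (snd p) * (snd p)^2)
      + 2 * (?e (fst p) * \<bar>ln \<bar>fst p\<bar>\<bar> * (?e (snd p) * (snd p)^0))
      + 2 * (?e (fst p) * (fst p)^0 * (?e (snd p) * \<bar>ln \<bar>snd p\<bar>\<bar>)))"
  proof -
    have B1: "integrable (lborel \<Otimes>\<^sub>M lborel) (\<lambda>p. ?e (fst p) * (fst p)^2 * (?e (snd p) * (snd p)^0))"
      by (rule integrable_prod_mult[OF gauss_int[OF s] gauss_int[OF s]])
    have B2: "integrable (lborel \<Otimes>\<^sub>M lborel) (\<lambda>p. ?e (fst p) * (fst p)^0 * (?e (snd p) * (snd p)^2))"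
      by (rule integrable_prod_mult[OF gauss_int[OF s] gauss_int[OF s]])
    have B3: "integrable (lborel \<Otimes>\<^sub>M lborel) (\<lambda>p. ?e (fst p) * \<bar>ln \<bar>fst p\<bar>\<bar> * (?e (snd p) * (snd p)^0))"
      by (rule integrable_prod_mult[OF gauss_ln_int[OF s] gauss_int[OF s]])
    have B4: "integrable (lborel \<Otimes>\<^sub>M lborel) (\<lambda>p. ?e (fst p) * (fst p)^0 * (?e (snd p) * \<bar>ln \<bar>snd p\<bar>\<bar>))"
      by (rule integrable_prod_mult[OF gauss_int[OF s] gauss_ln_int[OF s]])
    show ?thesis
      by (rule Bochner_Integration.integrable_add[OF Bochner_Integration.integrable_add[OF Bochner_Integration.integrable_add[OF B1 B2]]])
         (rule integrable_mult_right, rule B3, rule integrable_mult_right, rule B4)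
  qed
  have "integrable (lborel \<Otimes>\<^sub>M lborel) (\<lambda>p. ?e (fst p) * ?e (snd p) * \<bar>ln ((fst p)\<^sup>2 + (snd p)\<^sup>2)\<bar>)"
  proof (rule Bochner_Integration.integrable_bound[OF B])
    show "(\<lambda>p. ?e (fst p) * ?e (snd p) * \<bar>ln ((fst p)\<^sup>2 + (snd p)\<^sup>2)\<bar>) \<in> borel_measurable (lborel \<Otimes>\<^sub>M lborel)"
      by measurable
    show "AE p in lborel \<Otimes>\<^sub>M lborel. norm (?e (fst p) * ?e (snd p) * \<bar>ln ((fst p)\<^sup>2 + (snd p)\<^sup>2)\<bar>) \<le> norm (
        ?e (fst p) * (fst p)^2 * (?e (snd p) * (snd p)^0)
      + ?e (fst p) * (fst p)^0 * (?e (snd p) * (snd p)^2)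
      + 2 * (?e (fst p) * \<bar>ln \<bar>fst p\<bar>\<bar> * (?e (snd p) * (snd p)^0))
      + 2 * (?e (fst p) * (fst p)^0 * (?e (snd p) * \<bar>ln \<bar>snd p\<bar>\<bar>)))"
    proof (rule AE_I2)
      fix p :: "real \<times> real"
      obtain x y where p: "p = (x, y)" by (cases p)
      have ep: "0 < ?e x * ?e y" by simp
      have "?e x * ?e y * \<bar>ln (x\<^sup>2 + y\<^sup>2)\<bar> \<le> ?e x * ?e y * (x\<^sup>2 + y\<^sup>2 + 2 * \<bar>ln \<bar>x\<bar>\<bar> + 2 * \<bar>ln \<bar>y\<bar>\<bar>)"
        using ep by (intro mult_left_mono ln_sum_sq_bound) auto
      also have "\<dots> = ?e x * x^2 * (?e y * y^0) + ?e x * x^0 * (?e y * y^2)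
          + 2 * (?e x * \<bar>ln \<bar>x\<bar>\<bar> * (?e y * y^0)) + 2 * (?e x * x^0 * (?e y * \<bar>ln \<bar>y\<bar>\<bar>))"
      proof -
        have gen: "\<And>x1 x2 x3 x4 x5 (x6::real). x1*x2*(x5+x6+2*x3+2*x4) = x1*x5*(x2*1) + x1*1*(x2*x6) + 2*(x1*x3*(x2*1)) + 2*(x1*1*(x2*x4))"
          by (simp add: algebra_simps)
        show ?thesis by (simp only: power_0 gen)
      qed
      finally have le: "?e x * ?e y * \<bar>ln (x\<^sup>2 + y\<^sup>2)\<bar> \<le> ?e x * x^2 * (?e y * y^0) + ?e x * x^0 * (?e y * y^2)
          + 2 * (?e x * \<bar>ln \<bar>x\<bar>\<bar> * (?e y * y^0)) + 2 * (?e x * x^0 * (?e y * \<bar>ln \<bar>y\<bar>\<bar>))" .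
      have nn: "0 \<le> ?e x * ?e y * \<bar>ln (x\<^sup>2 + y\<^sup>2)\<bar>" by simp
      show "norm (?e (fst p) * ?e (snd p) * \<bar>ln ((fst p)\<^sup>2 + (snd p)\<^sup>2)\<bar>) \<le> norm (
        ?e (fst p) * (fst p)^2 * (?e (snd p) * (snd p)^0)
      + ?e (fst p) * (fst p)^0 * (?e (snd p) * (snd p)^2)
      + 2 * (?e (fst p) * \<bar>ln \<bar>fst p\<bar>\<bar> * (?e (snd p) * (snd p)^0))
      + 2 * (?e (fst p) * (fst p)^0 * (?e (snd p) * \<bar>ln \<bar>snd p\<bar>\<bar>)))"
        unfolding p fst_conv snd_conv real_norm_def abs_of_nonneg[OF nn] by (rule order_trans[OF le abs_ge_self])
    qed
  qed
  then show ?thesis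
  proof (rule integrable_complex_from)
    show "(\<lambda>z::complex. exp (- (cmod z)\<^sup>2 / s) * \<bar>ln ((cmod z)\<^sup>2)\<bar>) \<in> borel_measurable borel" by measurable
    fix x y :: real
    show "exp (- (fst (x,y))\<^sup>2 / s) * exp (- (snd (x,y))\<^sup>2 / s) * \<bar>ln ((fst (x,y))\<^sup>2 + (snd (x,y))\<^sup>2)\<bar>
     = exp (- (cmod (Complex x y))\<^sup>2 / s) * \<bar>ln ((cmod (Complex x y))\<^sup>2)\<bar>"
      unfolding fst_conv snd_conv cmod_Complex_sq exp_split by (rule refl)
  qed
qed


definition Gb :: "real \<Rightarrow> real \<Rightarrow> real \<Rightarrow> real" where
  "Gb P N0 x = (P / N0 * x + \<bar>ln (P / N0)\<bar> + \<bar>ln x\<bar>) / ln 2"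

lemma log_term_bound:
  fixes x y P N0 :: real assumes x: "0 \<le> x" and y: "0 \<le> y" and P: "P > 0" and N: "N0 > 0"
  shows "\<bar>log 2 (x / (x + y) + P * x / N0)\<bar> \<le> Gb P N0 x"
proof (cases "x = 0")
  case True
  then show ?thesis by (simp add: Gb_def log_def)
next
  case False
  then have xp: "x > 0" using x by simp
  define a where "a = x / (x + y) + P * x / N0"
  have q: "0 \<le> x / (x + y)" "x / (x + y) \<le> 1" using xp y by (auto simp: divide_le_eq)
  have pxn: "P * x / N0 > 0" using xp P N by simp
  have a_low: "P * x / N0 \<le> a" using q by (simp add: a_def)
  have a_up: "a \<le> 1 + P * x / N0" using q by (simp add: a_def)
  have ap: "a > 0" using a_low pxn by linarith
  have "ln a \<le> ln (1 + P * x / N0)" using ap a_up by simp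
  also have "\<dots> \<le> P * x / N0" using pxn by (intro ln_add_one_self_le_self) simp
  finally have u: "ln a \<le> P / N0 * x" by simp
  have "ln (P / N0 * x) \<le> ln a" using a_low pxn by simp
  moreover have "ln (P / N0 * x) = ln (P / N0) + ln x" using P N xp by (subst ln_mult) auto
  ultimately have l: "ln (P / N0) + ln x \<le> ln a" by simp
  have "\<bar>ln a\<bar> \<le> P / N0 * x + \<bar>ln (P / N0)\<bar> + \<bar>ln x\<bar>"
    using u l xp P N by (simp add: abs_le_iff) (smt (verit) mult_nonneg_nonneg divide_nonneg_nonneg)
  then have "\<bar>ln a\<bar> / ln 2 \<le> (P / N0 * x + \<bar>ln (P / N0)\<bar> + \<bar>ln x\<bar>) / ln 2"
    by (intro divide_right_mono) (simp_all add: ln_ge_zero)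
  then show ?thesis by (simp add: Gb_def log_def a_def)
qed

lemma pair_rate_bound:
  fixes x y P N0 :: real assumes x: "0 \<le> x" and y: "0 \<le> y" and P: "P > 0" and N: "N0 > 0"
  shows "\<bar>pair_rate P N0 x y\<bar> \<le> Gb P N0 x + Gb P N0 y"
proof -
  have "\<bar>log 2 (y / (x + y) + P * y / N0)\<bar> \<le> Gb P N0 y"
    using log_term_bound[OF y x P N] by (simp add: add.commute)
  then show ?thesis using log_term_bound[OF x y P N] unfolding pair_rate_def by linarith
qed

lemma Gb_meas[measurable]: "(\<lambda>u::complex. Gb P N0 ((cmod u)\<^sup>2)) \<in> borel_measurable borel"
  unfolding Gb_def by measurable

lemma int_G:
  assumes s: "s > 0" and N: "N0 > 0"
  shows "integrable (density lborel (cgauss_density s)) (\<lambda>u. Gb P N0 ((cmod u)\<^sup>2))"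
proof -
  have ceq: "cgauss_density s = (\<lambda>z. ennreal (exp (- (cmod z)\<^sup>2 / s) / (pi * s)))"
    by (simp add: cgauss_density_def fun_eq_iff)
  have I: "integrable lborel (\<lambda>z::complex. (P / N0 / (pi * s * ln 2)) * (exp (- (cmod z)\<^sup>2 / s) * (cmod z)\<^sup>2)
      + (\<bar>ln (P / N0)\<bar> / (pi * s * ln 2)) * exp (- (cmod z)\<^sup>2 / s)
      + (1 / (pi * s * ln 2)) * (exp (- (cmod z)\<^sup>2 / s) * \<bar>ln ((cmod z)\<^sup>2)\<bar>))"
    by (intro Bochner_Integration.integrable_add integrable_mult_right cint_sq[OF s] cint_const[OF s] cint_ln[OF s])
  have eq: "(P / N0 / (pi * s * ln 2)) * (exp (- (cmod z)\<^sup>2 / s) * (cmod z)\<^sup>2)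
      + (\<bar>ln (P / N0)\<bar> / (pi * s * ln 2)) * exp (- (cmod z)\<^sup>2 / s)
      + (1 / (pi * s * ln 2)) * (exp (- (cmod z)\<^sup>2 / s) * \<bar>ln ((cmod z)\<^sup>2)\<bar>)
     = (exp (- (cmod z)\<^sup>2 / s) / (pi * s)) *\<^sub>R Gb P N0 ((cmod z)\<^sup>2)" for z :: complex
  proof -
    have l2: "ln (2::real) > 0" by simp
    show ?thesis using s N l2 pi_gt_zero by (simp add: Gb_def field_simps)
  qed
  have "integrable lborel (\<lambda>z::complex. (exp (- (cmod z)\<^sup>2 / s) / (pi * s)) *\<^sub>R Gb P N0 ((cmod z)\<^sup>2))"
    using I unfolding eq .
  moreover have nn: "AE x in lborel. 0 \<le> exp (- (cmod x)\<^sup>2 / s) / (pi * s)" using s by (intro AE_I2) simp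
  ultimately show ?thesis
    unfolding ceq by (subst integrable_density) (auto simp: Gb_meas)
qed


lemma Gb_nonneg: "0 \<le> x \<Longrightarrow> 0 < P \<Longrightarrow> 0 < N0 \<Longrightarrow> 0 \<le> Gb P N0 x"
  unfolding Gb_def by (intro divide_nonneg_nonneg add_nonneg_nonneg) (auto simp: ln_ge_zero)

lemma F_meas[measurable]:
  "(\<lambda>z::complex\<times>complex. pair_rate P N0 ((cmod (fst z))\<^sup>2) ((cmod (snd z))\<^sup>2)) \<in> borel_measurable (borel \<Otimes>\<^sub>M borel)"
  unfolding pair_rate_def by measurable

context prob_space begin

lemma indep_pair:
  assumes ind: "indep_vars (\<lambda>_. borel) h I" and ab: "a \<in> I" "b \<in> I" "a \<noteq> b"
  shows "indep_var borel (h a) borel (h b)"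
proof -
  have "indep_var borel ((\<lambda>f. f a) \<circ> (\<lambda>\<omega>. restrict (\<lambda>i. h i \<omega>) {a}))
                  borel ((\<lambda>f. f b) \<circ> (\<lambda>\<omega>. restrict (\<lambda>i. h i \<omega>) {b}))"
    using ab by (intro indep_var_compose[OF indep_var_restrict[OF ind]]) auto
  also have "((\<lambda>f. f a) \<circ> (\<lambda>\<omega>. restrict (\<lambda>i. h i \<omega>) {a})) = h a" by auto
  also have "((\<lambda>f. f b) \<circ> (\<lambda>\<omega>. restrict (\<lambda>i. h i \<omega>) {b})) = h b" by auto
  finally show ?thesis .
qed

lemma distr_borel_eq:
  assumes "distributed M lborel X f"
  shows "distr M borel X = density lborel f"
proof -
  have "distr M borel X = distr M lborel X" by (rule distr_cong) simp_all
  then show ?thesis using assms by (simp add: distributed_def)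
qed

lemma pair_facts:
  assumes ind: "indep_vars (\<lambda>_. borel) h I" and ab: "a \<in> I" "b \<in> I" "a \<noteq> b"
    and da: "distributed M lborel (h a) (cgauss_density s)"
    and db: "distributed M lborel (h b) (cgauss_density s)"
    and s: "s > 0" and P: "P > 0" and N: "N0 > 0"
  shows "integrable M (\<lambda>\<omega>. pair_rate P N0 ((cmod (h a \<omega>))\<^sup>2) ((cmod (h b \<omega>))\<^sup>2))"
    and "(\<integral>\<omega>. pair_rate P N0 ((cmod (h a \<omega>))\<^sup>2) ((cmod (h b \<omega>))\<^sup>2) \<partial>M)
         = (\<integral>z. pair_rate P N0 ((cmod (fst z))\<^sup>2) ((cmod (snd z))\<^sup>2)
              \<partial>(density lborel (cgauss_density s) \<Otimes>\<^sub>M density lborel (cgauss_density s)))"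
proof -
  have Da: "distr M borel (h a) = density lborel (cgauss_density s)" by (rule distr_borel_eq[OF da])
  have Db: "distr M borel (h b) = density lborel (cgauss_density s)" by (rule distr_borel_eq[OF db])
  have ma[measurable]: "h a \<in> borel_measurable M" using da by (simp add: distributed_def)
  have mb[measurable]: "h b \<in> borel_measurable M" using db by (simp add: distributed_def)
  have Ga: "integrable M (\<lambda>\<omega>. Gb P N0 ((cmod (h a \<omega>))\<^sup>2))"
    using int_G[OF s N, of P] unfolding Da[symmetric] by (subst (asm) integrable_distr_eq) auto
  have Gb': "integrable M (\<lambda>\<omega>. Gb P N0 ((cmod (h b \<omega>))\<^sup>2))"
    using int_G[OF s N, of P] unfolding Db[symmetric] by (subst (asm) integrable_distr_eq) auto
  show "integrable M (\<lambda>\<omega>. pair_rate P N0 ((cmod (h a \<omega>))\<^sup>2) ((cmod (h b \<omega>))\<^sup>2))"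
  proof (rule Bochner_Integration.integrable_bound[OF Bochner_Integration.integrable_add[OF Ga Gb']])
    show "(\<lambda>\<omega>. pair_rate P N0 ((cmod (h a \<omega>))\<^sup>2) ((cmod (h b \<omega>))\<^sup>2)) \<in> borel_measurable M"
      unfolding pair_rate_def by measurable
    show "AE \<omega> in M. norm (pair_rate P N0 ((cmod (h a \<omega>))\<^sup>2) ((cmod (h b \<omega>))\<^sup>2))
        \<le> norm (Gb P N0 ((cmod (h a \<omega>))\<^sup>2) + Gb P N0 ((cmod (h b \<omega>))\<^sup>2))"
    proof (rule AE_I2)
      fix \<omega>
      have "0 \<le> Gb P N0 ((cmod (h a \<omega>))\<^sup>2)" "0 \<le> Gb P N0 ((cmod (h b \<omega>))\<^sup>2)"
        using P N by (simp_all add: Gb_nonneg)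
      moreover have "\<bar>pair_rate P N0 ((cmod (h a \<omega>))\<^sup>2) ((cmod (h b \<omega>))\<^sup>2)\<bar>
          \<le> Gb P N0 ((cmod (h a \<omega>))\<^sup>2) + Gb P N0 ((cmod (h b \<omega>))\<^sup>2)"
        using P N by (intro pair_rate_bound) auto
      ultimately show "norm (pair_rate P N0 ((cmod (h a \<omega>))\<^sup>2) ((cmod (h b \<omega>))\<^sup>2))
        \<le> norm (Gb P N0 ((cmod (h a \<omega>))\<^sup>2) + Gb P N0 ((cmod (h b \<omega>))\<^sup>2))"
        by simp
    qed
  qed
  have J: "distr M borel (h a) \<Otimes>\<^sub>M distr M borel (h b) = distr M (borel \<Otimes>\<^sub>M borel) (\<lambda>\<omega>. (h a \<omega>, h b \<omega>))"
    using indep_var_distribution_eq indep_pair[OF ind ab] by blast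
  have "(\<integral>z. pair_rate P N0 ((cmod (fst z))\<^sup>2) ((cmod (snd z))\<^sup>2)
              \<partial>(density lborel (cgauss_density s) \<Otimes>\<^sub>M density lborel (cgauss_density s)))
     = (\<integral>z. pair_rate P N0 ((cmod (fst z))\<^sup>2) ((cmod (snd z))\<^sup>2) \<partial>distr M (borel \<Otimes>\<^sub>M borel) (\<lambda>\<omega>. (h a \<omega>, h b \<omega>)))"
    unfolding J[symmetric] Da Db ..
  also have "\<dots> = (\<integral>\<omega>. pair_rate P N0 ((cmod (h a \<omega>))\<^sup>2) ((cmod (h b \<omega>))\<^sup>2) \<partial>M)"
    by (subst integral_distr) auto
  finally show "(\<integral>\<omega>. pair_rate P N0 ((cmod (h a \<omega>))\<^sup>2) ((cmod (h b \<omega>))\<^sup>2) \<partial>M)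
         = (\<integral>z. pair_rate P N0 ((cmod (fst z))\<^sup>2) ((cmod (snd z))\<^sup>2)
              \<partial>(density lborel (cgauss_density s) \<Otimes>\<^sub>M density lborel (cgauss_density s)))" ..
qed

end


lemma avg_const:
  fixes M :: "'a measure" and h :: "nat \<Rightarrow> 'a \<Rightarrow> complex"
  assumes M: "prob_space M" and L: "L \<ge> 2" and P: "P > 0" and N: "N0 > 0" and s: "s > 0"
    and ind: "prob_space.indep_vars M (\<lambda>_. borel) h {1..L}"
    and dist: "\<forall>j\<in>{1..L}. distributed M lborel (h j) (cgauss_density s)"
    and pr: "\<And>t. t \<in> {1..L-1} \<Longrightarrow> fst (pr t) \<in> {1..L} \<and> snd (pr t) \<in> {1..L} \<and> fst (pr t) \<noteq> snd (pr t)"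
  shows "avg_sum_rate M L P N0 h pr
     = (\<integral>z. pair_rate P N0 ((cmod (fst z))\<^sup>2) ((cmod (snd z))\<^sup>2)
              \<partial>(density lborel (cgauss_density s) \<Otimes>\<^sub>M density lborel (cgauss_density s))) / 2"
    (is "_ = ?C / 2")
proof -
  interpret prob_space M by (rule M)
  let ?f = "\<lambda>t \<omega>. pair_rate P N0 ((cmod (h (fst (pr t)) \<omega>))\<^sup>2) ((cmod (h (snd (pr t)) \<omega>))\<^sup>2)"
  have facts: "integrable M (?f t) \<and> integral\<^sup>L M (?f t) = ?C" if t: "t \<in> {1..L-1}" for t
    using pr[OF t] pair_facts[OF ind _ _ _ _ _ s P N, of "fst (pr t)" "snd (pr t)"] dist by auto
  have "avg_sum_rate M L P N0 h pr = (\<integral>\<omega>. (1 / (2 * (real L - 1))) * (\<Sum>t\<in>{1..L-1}. ?f t \<omega>) \<partial>M)"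
    unfolding avg_sum_rate_def sum_rate_def ..
  also have "\<dots> = (1 / (2 * (real L - 1))) * (\<integral>\<omega>. (\<Sum>t\<in>{1..L-1}. ?f t \<omega>) \<partial>M)"
    by (rule integral_mult_right_zero)
  also have "(\<integral>\<omega>. (\<Sum>t\<in>{1..L-1}. ?f t \<omega>) \<partial>M) = (\<Sum>t\<in>{1..L-1}. integral\<^sup>L M (?f t))"
    by (rule Bochner_Integration.integral_sum) (use facts in blast)
  also have "\<dots> = (\<Sum>t\<in>{1..L-1}. ?C)"
    by (rule sum.cong) (use facts in auto)
  also have "\<dots> = real (L - 1) * ?C" by simp
  also have "real (L - 1) = real L - 1" using L by (simp add: of_nat_diff)
  finally have eq: "avg_sum_rate M L P N0 h pr = 1 / (2 * (real L - 1)) * ((real L - 1) * ?C)" .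
  have nz: "real L - 1 \<noteq> 0" using L by simp
  have gen: "\<And>a c::real. a \<noteq> 0 \<Longrightarrow> 1 / (2 * a) * (a * c) = c / 2" by (simp add: field_simps)
  show ?thesis unfolding eq by (rule gen[OF nz])
qed


theorem proposition4:
  fixes M :: "'a measure" and h :: "nat \<Rightarrow> 'a \<Rightarrow> complex"
    and L :: nat and P N0 s :: real and p :: "nat pmf"
  assumes "prob_space M"
    and "L \<ge> 2" and "P > 0" and "N0 > 0" and "s > 0"
    and "prob_space.indep_vars M (\<lambda>_. borel) h {1..L}"
    and "\<forall>j\<in>{1..L}. distributed M lborel (h j) (cgauss_density s)"
    and "set_pmf p \<subseteq> {1..L}"
  shows "measure_pmf.expectation p (\<lambda>i. avg_sum_rate M L P N0 h (proposed_pairing i))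
           = avg_sum_rate M L P N0 h schemeA_pairing
       \<and> avg_sum_rate M L P N0 h schemeA_pairing
           = avg_sum_rate M L P N0 h (schemeB_pairing L)"
proof -
  define C where "C = (\<integral>z. pair_rate P N0 ((cmod (fst z))\<^sup>2) ((cmod (snd z))\<^sup>2)
              \<partial>(density lborel (cgauss_density s) \<Otimes>\<^sub>M density lborel (cgauss_density s)))"
  have avgC: "avg_sum_rate M L P N0 h pr = C / 2"
    if "\<And>t. t \<in> {1..L-1} \<Longrightarrow> fst (pr t) \<in> {1..L} \<and> snd (pr t) \<in> {1..L} \<and> fst (pr t) \<noteq> snd (pr t)" for pr
    unfolding C_def by (rule avg_const[OF assms(1-7) that])
  have A: "avg_sum_rate M L P N0 h schemeA_pairing = C / 2"
    by (rule avgC) (auto simp: schemeA_pairing_def)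
  have B: "avg_sum_rate M L P N0 h (schemeB_pairing L) = C / 2"
  proof (rule avgC)
    fix t assume t: "t \<in> {1..L-1}"
    show "fst (schemeB_pairing L t) \<in> {1..L} \<and> snd (schemeB_pairing L t) \<in> {1..L} \<and> fst (schemeB_pairing L t) \<noteq> snd (schemeB_pairing L t)"
    proof (cases "t \<le> L div 2")
      case True
      then have "2 * t \<le> L" by linarith
      then show ?thesis using t True by (auto simp: schemeB_pairing_def)
    next
      case False
      then have "2 * t > L" by linarith
      then show ?thesis using t False by (auto simp: schemeB_pairing_def)
    qed
  qed
  have Pr: "avg_sum_rate M L P N0 h (proposed_pairing i) = C / 2" if i: "i \<in> set_pmf p" for i
  proof (rule avgC)
    fix t assume t: "t \<in> {1..L-1}"
    have "i \<in> {1..L}" using i assms(8) by auto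
    then show "fst (proposed_pairing i t) \<in> {1..L} \<and> snd (proposed_pairing i t) \<in> {1..L} \<and> fst (proposed_pairing i t) \<noteq> snd (proposed_pairing i t)"
      using t by (auto simp: proposed_pairing_def)
  qed
  have "measure_pmf.expectation p (\<lambda>i. avg_sum_rate M L P N0 h (proposed_pairing i))
      = measure_pmf.expectation p (\<lambda>i. C / 2)"
    by (rule integral_cong_AE) (simp_all add: AE_measure_pmf_iff Pr)
  also have "\<dots> = C / 2" by simp
  finally show ?thesis using A B by simp
qed


end
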